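(* Let $F>1$ and $s>0$ be constants. Consider the self-adjusting $(1,\lambda)$ EA (defined in the context) with update strength $F$ and success rate $s$, using either standard bit mutation with mutation probability $p\in O(1/n)\cap n^{-O(1)}$ or the heavy-tailed mutation operator with a constant $\beta>1$, on an everywhere hard function $f$ with constant $\varepsilon$ (i.e. $p_{\max}=O(n^{-\varepsilon})$) and $d+1=n^{o(\log n)}$ function values, started with an arbitrary search point and arbitrary offspring population size $\lambda_0$. Let $\lambda_2:=n^{\varepsilon/2}$ and let $\tau$ be the first generation where $\lambda_\tau\ge\lambda_2$. Then $E[\tau]=O(\log\lambda_2)$, and during these $\tau$ generations the algorithm makes only $\lambda_0+O(\lambda_2\log\lambda_2)$ function evaluations in expectation.
   Context: Search space $\{0,1\}^n$; asymptotics with respect to $n\to\infty$. W.l.o.g. $f$ takes values in $\{0,\dots,d\}$ with global optima at value $d$. Self-adjusting $(1,\lambda)$ EA: maintains a search point $x$ and real-valued $\lambda$ (rounded to a nearest integer when needed); $\lambda_t$ is the value in generation $t$. Each generation creates $\lambda$ offspring independently by mutating $x$ (one evaluation each), picks an offspring $y$ of maximum fitness (ties uniformly at random), sets $x\leftarrow y$ in any case, and sets $\lambda\leftarrow\max\{1,\lambda/F\}$ if $f(y)>f(x)$ and $\lambda\leftarrow F^{1/s}\lambda$ otherwise. Standard bit mutation with probability $p$ flips each bit independently with probability $p$. Heavy-tailed mutation with $\beta>1$ draws $\chi\in\{1,\dots,n/2\}$ with $\Pr[\chi=i]=i^{-\beta}/\sum_{j=1}^{n/2}j^{-\beta}$ and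 then does standard bit mutation with probability $\chi/n$. $p_x^+$ is the probability that a single offspring of $x$ has strictly larger fitness than $x$; $p_{\max}:=\max\{p_x^+ : f(x)<d\}$. $f$ is everywhere hard if $p_{\max}=O(n^{-\varepsilon})$ for some constant $0<\varepsilon<1$. *)

theory Defs
  imports "HOL-Probability.Probability" "HOL-Library.Landau_Symbols"
begin

text \<open>Search points of {0,1}^n are boolean lists of length n.\<close>

fun sbm :: "real \<Rightarrow> bool list \<Rightarrow> bool list pmf" where
  "sbm p [] = return_pmf []"
| "sbm p (b # bs) =
     bernoulli_pmf p \<bind> (\<lambda>c. sbm p bs \<bind> (\<lambda>r. return_pmf ((b \<noteq> c) # r)))"

definition chi_pmf :: "real \<Rightarrow> nat \<Rightarrow> nat pmf" where
  "chi_pmf \<beta> n = embed_pmf (\<lambda>i. if 1 \<le> i \<and> i \<le> n div 2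
      then real i powr (-\<beta>) / (\<Sum>j=1..n div 2. real j powr (-\<beta>)) else 0)"

definition heavy_tailed :: "real \<Rightarrow> bool list \<Rightarrow> bool list pmf" where
  "heavy_tailed \<beta> x = chi_pmf \<beta> (length x) \<bind> (\<lambda>k. sbm (real k / real (length x)) x)"

fun iid_list :: "nat \<Rightarrow> 'a pmf \<Rightarrow> 'a list pmf" where
  "iid_list 0 P = return_pmf []"
| "iid_list (Suc k) P = P \<bind> (\<lambda>y. iid_list k P \<bind> (\<lambda>ys. return_pmf (y # ys)))"

definition p_plus :: "(bool list \<Rightarrow> bool list pmf) \<Rightarrow> (bool list \<Rightarrow> nat) \<Rightarrow> bool list \<Rightarrow> real" where
  "p_plus mut g x = measure_pmf.prob (mut x) {y. g y > g x}"

text \<open>Everywhere hard with constant eps: p_max = O(n^-eps), where p_max(n) is the maximum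
  of p_plus over non-optimal points of length n (stated as a bound on all of them).\<close>
definition everywhere_hard ::
  "(bool list \<Rightarrow> bool list pmf) \<Rightarrow> (nat \<Rightarrow> bool list \<Rightarrow> nat) \<Rightarrow> (nat \<Rightarrow> nat) \<Rightarrow> real \<Rightarrow> bool" where
  "everywhere_hard mut f d \<epsilon> \<longleftrightarrow> (\<exists>c. eventually (\<lambda>n. \<forall>x. length x = n \<and> f n x < d n \<longrightarrow>
       p_plus mut (f n) x \<le> c * real n powr (-\<epsilon>)) at_top)"

text \<open>State = (x, lambda).
  lambda is rounded to the nearest integer to get the number of offspring;
  ties among best offspring are broken uniformly at random (over offspring).\<close>
definition ea_step :: "real \<Rightarrow> real \<Rightarrow> (bool list \<Rightarrow> nat) \<Rightarrow> (bool list \<Rightarrow> bool list pmf)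
    \<Rightarrow> bool list \<times> real \<Rightarrow> (bool list \<times> real) pmf" where
  "ea_step F s g mut st = (case st of (x, lam) \<Rightarrow>
     (let k = nat (round lam) in
      iid_list k (mut x) \<bind> (\<lambda>ys.
        let M = Max (g ` set ys) in
        pmf_of_set {i. i < k \<and> g (ys ! i) = M} \<bind> (\<lambda>i.
          let y = ys ! i in
          return_pmf (y, if g y > g x then max 1 (lam / F) else F powr (1 / s) * lam)))))"

fun traj :: "real \<Rightarrow> real \<Rightarrow> (bool list \<Rightarrow> nat) \<Rightarrow> (bool list \<Rightarrow> bool list pmf)
    \<Rightarrow> bool list \<Rightarrow> real \<Rightarrow> nat \<Rightarrow> (bool list \<times> real) list pmf" where
  "traj F s g mut x0 lam0 0 = return_pmf [(x0, lam0)]"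
| "traj F s g mut x0 lam0 (Suc t) = traj F s g mut x0 lam0 t \<bind>
     (\<lambda>h. ea_step F s g mut (last h) \<bind> (\<lambda>st. return_pmf (h @ [st])))"

text \<open>tau = first generation t with lambda_t >= L. Event tau > t: lambda_0..lambda_t all < L.
  E[tau] = sum over t of Pr[tau > t].\<close>
definition expected_tau :: "real \<Rightarrow> real \<Rightarrow> (bool list \<Rightarrow> nat) \<Rightarrow> (bool list \<Rightarrow> bool list pmf)
    \<Rightarrow> real \<Rightarrow> bool list \<Rightarrow> real \<Rightarrow> ennreal" where
  "expected_tau F s g mut L x0 lam0 =
     (\<Sum>t. emeasure (measure_pmf (traj F s g mut x0 lam0 t)) {h. \<forall>st\<in>set h. snd st < L})"

text \<open>Expected number of evaluations in generations 0..tau-1: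
  sum over t of E[ round(lambda_t) * 1{tau > t} ].\<close>
definition expected_evals :: "real \<Rightarrow> real \<Rightarrow> (bool list \<Rightarrow> nat) \<Rightarrow> (bool list \<Rightarrow> bool list pmf)
    \<Rightarrow> real \<Rightarrow> bool list \<Rightarrow> real \<Rightarrow> ennreal" where
  "expected_evals F s g mut L x0 lam0 =
     (\<Sum>t. \<integral>\<^sup>+ h. (if \<forall>st\<in>set h. snd st < L then ennreal (real (nat (round (snd (last h))))) else 0)
        \<partial>measure_pmf (traj F s g mut x0 lam0 t))"

end

theory Submission
  imports Defs
begin

lemma traj_nonempty: "h \<in> set_pmf (traj F s g mut x0 lam0 t) \<Longrightarrow> h \<noteq> []"
  by (induction t arbitrary: h) (auto simp: set_bind_pmf)

lemma traj_decomp: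
  "traj F s g mut x0 lam0 (Suc t) = ea_step F s g mut (x0, lam0) \<bind>
     (\<lambda>st. map_pmf ((#) (x0, lam0)) (traj F s g mut (fst st) (snd st) t))"
proof (induction t)
  case 0
  then show ?case by (simp add: bind_return_pmf map_return_pmf)
next
  case (Suc t)
  have "traj F s g mut x0 lam0 (Suc (Suc t)) = traj F s g mut x0 lam0 (Suc t) \<bind>
     (\<lambda>h. ea_step F s g mut (last h) \<bind> (\<lambda>st. return_pmf (h @ [st])))" by simp
  also have "\<dots> = ea_step F s g mut (x0, lam0) \<bind>
     (\<lambda>st. map_pmf ((#) (x0, lam0)) (traj F s g mut (fst st) (snd st) t) \<bind>
     (\<lambda>h. ea_step F s g mut (last h) \<bind> (\<lambda>st. return_pmf (h @ [st]))))"
    by (subst Suc) (rule bind_assoc_pmf)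
  also have "\<dots> = ea_step F s g mut (x0, lam0) \<bind>
     (\<lambda>st. map_pmf ((#) (x0, lam0)) (traj F s g mut (fst st) (snd st) (Suc t)))"
  proof (rule bind_pmf_cong[OF refl])
    fix st
    show "map_pmf ((#) (x0, lam0)) (traj F s g mut (fst st) (snd st) t) \<bind>
     (\<lambda>h. ea_step F s g mut (last h) \<bind> (\<lambda>st. return_pmf (h @ [st]))) =
      map_pmf ((#) (x0, lam0)) (traj F s g mut (fst st) (snd st) (Suc t))"
      unfolding bind_map_pmf traj.simps map_bind_pmf
      apply (rule bind_pmf_cong[OF refl])
      using traj_nonempty by (fastforce simp: map_bind_pmf map_return_pmf)
  qed
  finally show ?case .
qed

definition Tm :: "real \<Rightarrow> real \<Rightarrow> (bool list \<Rightarrow> nat) \<Rightarrow> (bool list \<Rightarrow> bool list pmf)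
    \<Rightarrow> real \<Rightarrow> (bool list \<times> real \<Rightarrow> ennreal) \<Rightarrow> nat \<Rightarrow> bool list \<times> real \<Rightarrow> ennreal" where
  "Tm F s g mut L c t st = (\<integral>\<^sup>+h. (if \<forall>st\<in>set h. snd st < L then c (last h) else 0)
      \<partial>traj F s g mut (fst st) (snd st) t)"

lemma Tm_0: "Tm F s g mut L c 0 st = (if snd st < L then c st else 0)"
  by (simp add: Tm_def)

lemma Tm_Suc: "Tm F s g mut L c (Suc t) s0 =
   (if snd s0 < L then \<integral>\<^sup>+st. Tm F s g mut L c t st \<partial>ea_step F s g mut s0 else 0)"
proof -
  have "Tm F s g mut L c (Suc t) s0 = \<integral>\<^sup>+st. \<integral>\<^sup>+h. (if \<forall>x\<in>set (s0 # h). snd x < L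
       then c (last (s0 # h)) else 0) \<partial>traj F s g mut (fst st) (snd st) t \<partial>ea_step F s g mut s0"
    unfolding Tm_def traj_decomp[of F s g mut "fst s0" "snd s0"] by simp
  also have "\<dots> = \<integral>\<^sup>+st. (if snd s0 < L then Tm F s g mut L c t st else 0) \<partial>ea_step F s g mut s0"
    unfolding Tm_def
    apply (rule nn_integral_cong)
    apply (cases "snd s0 < L")
     apply (auto intro!: nn_integral_cong_AE simp: AE_measure_pmf_iff dest: traj_nonempty)
    done
  finally show ?thesis by (cases "snd s0 < L") auto
qed

lemma sum_bound:
  fixes c G :: "bool list \<times> real \<Rightarrow> ennreal" and inv :: "bool list \<times> real \<Rightarrow> bool"
  assumes inv_step: "\<And>s0 st. inv s0 \<Longrightarrow> snd s0 < L \<Longrightarrow> st \<in> set_pmf (ea_step F s g mut s0) \<Longrightarrow> inv st"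
  and cb: "\<And>s0. inv s0 \<Longrightarrow> snd s0 < L \<Longrightarrow> c s0 \<le> M"
  and drift: "\<And>s0. inv s0 \<Longrightarrow> snd s0 < L \<Longrightarrow> (\<integral>\<^sup>+st. G st \<partial>ea_step F s g mut s0) + 1 \<le> G s0"
  shows "inv s0 \<Longrightarrow> (\<Sum>t<T. Tm F s g mut L c t s0) \<le> M * G s0"
proof (induction T arbitrary: s0)
  case 0 show ?case by simp
next
  case (Suc T)
  show ?case
  proof (cases "snd s0 < L")
    case False
    have "Tm F s g mut L c t s0 = 0" for t
      using False by (cases t) (simp_all add: Tm_0 Tm_Suc)
    then show ?thesis by simp
  next
    case True
    have "(\<Sum>t<Suc T. Tm F s g mut L c t s0) = c s0 + (\<Sum>t<T. Tm F s g mut L c (Suc t) s0)"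
      by (subst sum.lessThan_Suc_shift) (simp add: Tm_0 True)
    also have "(\<Sum>t<T. Tm F s g mut L c (Suc t) s0) =
        (\<integral>\<^sup>+st. (\<Sum>t<T. Tm F s g mut L c t st) \<partial>ea_step F s g mut s0)"
      by (simp add: Tm_Suc True nn_integral_sum)
    also have "\<dots> \<le> (\<integral>\<^sup>+st. M * G st \<partial>ea_step F s g mut s0)"
      by (rule nn_integral_mono_AE)
        (auto simp: AE_measure_pmf_iff intro: Suc.IH inv_step[OF Suc.prems True])
    also have "\<dots> = M * (\<integral>\<^sup>+st. G st \<partial>ea_step F s g mut s0)"
      by (rule nn_integral_cmult) simp
    also have "c s0 + \<dots> \<le> M + M * (\<integral>\<^sup>+st. G st \<partial>ea_step F s g mut s0)"
      using cb[OF Suc.prems True] by (rule add_right_mono)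
    also have "\<dots> = M * ((\<integral>\<^sup>+st. G st \<partial>ea_step F s g mut s0) + 1)"
      by (simp add: distrib_left add.commute)
    also have "\<dots> \<le> M * G s0"
      using drift[OF Suc.prems True] by (rule mult_left_mono) simp
    finally show ?thesis by (simp add: add_left_mono)
  qed
qed

lemma suminf_bound: assumes "\<And>T. (\<Sum>t<T. f t) \<le> (B::ennreal)" shows "(\<Sum>t. f t) \<le> B"
  by (simp add: suminf_eq_SUP SUP_least assms)

lemma sbm_length: "y \<in> set_pmf (sbm p x) \<Longrightarrow> length y = length x"
  by (induction x arbitrary: y) (auto simp: set_bind_pmf)

lemma heavy_length: "y \<in> set_pmf (heavy_tailed \<beta> x) \<Longrightarrow> length y = length x"
  unfolding heavy_tailed_def by (auto simp: set_bind_pmf dest: sbm_length)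

lemma iid_set: "ys \<in> set_pmf (iid_list k P) \<Longrightarrow> length ys = k \<and> set ys \<subseteq> set_pmf P"
  by (induction k arbitrary: ys) (fastforce simp: set_bind_pmf)+

lemma iid_union:
  "emeasure (measure_pmf (iid_list k P)) {ys. \<exists>y\<in>set ys. Q y} \<le> of_nat k * emeasure (measure_pmf P) {y. Q y}"
proof (induction k)
  case 0
  then show ?case by simp
next
  case (Suc k)
  define E where "E = {ys. \<exists>y\<in>set ys. Q y}"
  have "emeasure (measure_pmf (iid_list (Suc k) P)) E =
     (\<integral>\<^sup>+y. \<integral>\<^sup>+ys. indicator E (y # ys) \<partial>iid_list k P \<partial>P)"
    by simp
  also have "\<dots> \<le> (\<integral>\<^sup>+y. (indicator {y. Q y} y + emeasure (measure_pmf (iid_list k P)) E) \<partial>P)"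
  proof (rule nn_integral_mono)
    fix y
    have "(\<integral>\<^sup>+ys. indicator E (y # ys) \<partial>iid_list k P) \<le>
        (\<integral>\<^sup>+ys. (indicator {y. Q y} y + indicator E ys) \<partial>iid_list k P)"
      by (rule nn_integral_mono) (auto simp: E_def indicator_def)
    also have "\<dots> = indicator {y. Q y} y + emeasure (measure_pmf (iid_list k P)) E"
      by (subst nn_integral_add) (auto simp: measure_pmf.emeasure_space_1)
    finally show "(\<integral>\<^sup>+ys. indicator E (y # ys) \<partial>iid_list k P) \<le> \<dots>" .
  qed
  also have "\<dots> = emeasure (measure_pmf P) {y. Q y} + emeasure (measure_pmf (iid_list k P)) E"
    by (subst nn_integral_add) (auto simp: measure_pmf.emeasure_space_1)
  also have "\<dots> \<le> emeasure (measure_pmf P) {y. Q y} + of_nat k * emeasure (measure_pmf P) {y. Q y}"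
    using Suc by (simp add: E_def add_left_mono)
  also have "\<dots> = of_nat (Suc k) * emeasure (measure_pmf P) {y. Q y}"
    by (simp add: distrib_right)
  finally show ?case by (simp add: E_def)
qed

definition phi :: "real \<Rightarrow> real \<Rightarrow> real \<Rightarrow> real \<Rightarrow> real" where
  "phi F s Lb l = (if Lb \<le> l then 0 else 2 * (ln Lb - ln l) / ln (F powr (1/s)) + 2)"

lemma phi_facts:
  fixes F s Lb lam :: real
  assumes "F > 1" "s > 0" "1 \<le> lam" "lam < Lb"
  defines "a \<equiv> F powr (1/s)"
  shows "phi F s Lb (max 1 (lam/F)) \<le> phi F s Lb lam + 2 * s" "phi F s Lb (a * lam) \<le> phi F s Lb lam - 2" "phi F s Lb lam \<ge> 2"
    "phi F s Lb lam \<le> 2 * ln Lb / ln a + 2"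
proof -
  have lnF: "ln F > 0" using assms by simp
  have lna: "ln a = ln F / s" unfolding a_def using assms by (simp add: ln_powr)
  have lnapos: "ln a > 0" using lna lnF assms by simp
  have apos: "a > 0" unfolding a_def using assms by simp
  have Lpos: "Lb > 0" using assms by simp
  have lamL: "ln lam < ln Lb" using assms by simp
  have phil: "phi F s Lb lam = 2 * (ln Lb - ln lam) / ln a + 2" unfolding phi_def a_def[symmetric] using assms by simp
  show "phi F s Lb lam \<ge> 2" using phil lamL lnapos by simp
  show "phi F s Lb lam \<le> 2 * ln Lb / ln a + 2" using phil lnapos assms
    by (simp add: divide_right_mono)
  show "phi F s Lb (max 1 (lam/F)) \<le> phi F s Lb lam + 2 * s"
  proof (cases "Lb \<le> max 1 (lam/F)")
    case True
    then show ?thesis using \<open>phi F s Lb lam \<ge> 2\<close> assms unfolding phi_def a_def[symmetric] by simp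
  next
    case False
    have "ln (max 1 (lam/F)) \<ge> ln (lam/F)" using assms by simp
    also have "ln (lam/F) = ln lam - ln F" using assms by (simp add: ln_div)
    finally have "2 * (ln Lb - ln (max 1 (lam/F))) / ln a \<le> 2 * (ln Lb - ln lam + ln F) / ln a"
      using lnapos by (simp add: divide_right_mono)
    also have "\<dots> = 2 * (ln Lb - ln lam) / ln a + 2 * s"
      using lnapos lnF assms lna by (simp add: field_simps)
    finally show ?thesis using False phil unfolding phi_def a_def[symmetric] by simp
  qed
  show "phi F s Lb (a * lam) \<le> phi F s Lb lam - 2"
  proof (cases "Lb \<le> a * lam")
    case True
    then show ?thesis using phil lamL lnapos unfolding phi_def a_def[symmetric] by simp
  next
    case False
    have "ln (a * lam) = ln a + ln lam" using apos assms by (simp add: ln_mult)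
    then have "2 * (ln Lb - ln (a * lam)) / ln a = 2 * (ln Lb - ln lam) / ln a - 2"
      using lnapos by (simp add: field_simps)
    then show ?thesis using False phil unfolding phi_def a_def[symmetric] by simp
  qed
qed

lemma phi_nonneg: "F > 1 \<Longrightarrow> s > 0 \<Longrightarrow> 0 < l \<Longrightarrow> phi F s Lb l \<ge> 0"
  unfolding phi_def by (auto simp: ln_powr intro!: add_nonneg_nonneg divide_nonneg_pos)

lemma round_ge1: "1 \<le> (lam::real) \<Longrightarrow> 1 \<le> nat (round lam)"
proof -
  assume "1 \<le> lam"
  moreover have "lam - 1/2 \<le> of_int (round lam)" using of_int_round_ge[of lam] by linarith
  ultimately have "(0::real) < of_int (round lam)" by linarith
  then show ?thesis by simp
qed

lemma drift:
  fixes F s Lb lam :: real and gg :: "bool list \<Rightarrow> nat" and mut :: "bool list \<Rightarrow> bool list pmf" and x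
  assumes F1: "F > 1" and s0: "s > 0" and l1: "1 \<le> lam" and lL: "lam < Lb"
  and q: "ennreal (2 * s + 2) * emeasure (measure_pmf (iid_list (nat (round lam)) (mut x))) {ys. \<exists>y\<in>set ys. gg y > gg x} \<le> 1"
  shows "(\<integral>\<^sup>+st. ennreal (phi F s Lb (snd st)) \<partial>ea_step F s gg mut (x,lam)) + 1 \<le> ennreal (phi F s Lb lam)"
proof -
  define k where "k = nat (round lam)"
  define E where "E = {ys. \<exists>y\<in>set ys. gg y > gg x}"
  define a where "a = F powr (1/s)"
  define \<psi> where "\<psi> = (\<lambda>ys. ennreal (phi F s Lb lam - 2) + ennreal (2 * s + 2) * indicator E ys)"
  note pf = phi_facts[OF F1 s0 l1 lL]
  have k1: "k \<ge> 1" unfolding k_def using round_ge1[OF l1] .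
  have pw: "ennreal (phi F s Lb (if gg (ys!i) > gg x then max 1 (lam/F) else F powr (1/s) * lam)) \<le> \<psi> ys"
    if ys: "ys \<in> set_pmf (iid_list k (mut x))"
    and i: "i \<in> set_pmf (pmf_of_set {i. i < k \<and> gg (ys ! i) = Max (gg ` set ys)})" for ys i
  proof -
    have len: "length ys = k" using iid_set[OF ys] by simp
    then have "ys \<noteq> []" using k1 by auto
    then have "Max (gg ` set ys) \<in> gg ` set ys" by (intro Max_in) auto
    then obtain j where "j < k" "gg (ys ! j) = Max (gg ` set ys)"
      using len by (auto simp: in_set_conv_nth)
    then have ne: "{i. i < k \<and> gg (ys ! i) = Max (gg ` set ys)} \<noteq> {}" by auto
    have "i < k" using i ne by (subst (asm) set_pmf_of_set) auto
    then have yi: "ys ! i \<in> set ys" using len by simp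
    show ?thesis
    proof (cases "gg (ys!i) > gg x")
      case True
      then have "ys \<in> E" using yi unfolding E_def by blast
      then have "\<psi> ys = ennreal (phi F s Lb lam - 2 + (2 * s + 2))"
        unfolding \<psi>_def using pf s0 by (subst ennreal_plus) auto
      then show ?thesis using True pf by (auto intro!: ennreal_leI)
    next
      case False
      have "ennreal (phi F s Lb (F powr (1/s) * lam)) \<le> ennreal (phi F s Lb lam - 2)"
        using pf by (intro ennreal_leI) simp
      also have "\<dots> \<le> \<psi> ys" unfolding \<psi>_def by simp
      finally show ?thesis using False by simp
    qed
  qed
  have "(\<integral>\<^sup>+st. ennreal (phi F s Lb (snd st)) \<partial>ea_step F s gg mut (x,lam)) =
     (\<integral>\<^sup>+ys. \<integral>\<^sup>+i. ennreal (phi F s Lb (if gg (ys!i) > gg x then max 1 (lam/F) else F powr (1/s) * lam))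
        \<partial>pmf_of_set {i. i < k \<and> gg (ys ! i) = Max (gg ` set ys)} \<partial>iid_list k (mut x))"
    unfolding ea_step_def Let_def k_def by simp
  also have "\<dots> \<le> (\<integral>\<^sup>+ys. \<psi> ys \<partial>iid_list k (mut x))"
  proof (rule nn_integral_mono_AE, unfold AE_measure_pmf_iff, intro ballI)
    fix ys assume ys: "ys \<in> set_pmf (iid_list k (mut x))"
    have "(\<integral>\<^sup>+i. ennreal (phi F s Lb (if gg (ys!i) > gg x then max 1 (lam/F) else F powr (1/s) * lam))
        \<partial>pmf_of_set {i. i < k \<and> gg (ys ! i) = Max (gg ` set ys)}) \<le>
        (\<integral>\<^sup>+i. \<psi> ys \<partial>pmf_of_set {i. i < k \<and> gg (ys ! i) = Max (gg ` set ys)})"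
      apply (rule nn_integral_mono_AE)
      apply (unfold AE_measure_pmf_iff)
      apply (rule ballI)
      apply (erule pw[OF ys])
      done
    also have "\<dots> = \<psi> ys" by (simp add: measure_pmf.emeasure_space_1)
    finally show "(\<integral>\<^sup>+i. ennreal (phi F s Lb (if gg (ys!i) > gg x then max 1 (lam/F) else F powr (1/s) * lam))
        \<partial>pmf_of_set {i. i < k \<and> gg (ys ! i) = Max (gg ` set ys)}) \<le> \<psi> ys" .
  qed
  also have "\<dots> = ennreal (phi F s Lb lam - 2) + ennreal (2 * s + 2) * emeasure (measure_pmf (iid_list k (mut x))) E"
    unfolding \<psi>_def
    by (subst nn_integral_add) (auto simp: measure_pmf.emeasure_space_1 nn_integral_cmult_indicator)
  finally have I: "(\<integral>\<^sup>+st. ennreal (phi F s Lb (snd st)) \<partial>ea_step F s gg mut (x,lam)) \<le>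
      ennreal (phi F s Lb lam - 2) + ennreal (2 * s + 2) * emeasure (measure_pmf (iid_list k (mut x))) E" .
  have B1: "ennreal (2 * s + 2) * emeasure (measure_pmf (iid_list k (mut x))) E \<le> 1"
    using q unfolding E_def k_def .
  have "(\<integral>\<^sup>+st. ennreal (phi F s Lb (snd st)) \<partial>ea_step F s gg mut (x,lam)) + 1 \<le>
      ennreal (phi F s Lb lam - 2) + ennreal (2 * s + 2) * emeasure (measure_pmf (iid_list k (mut x))) E + 1"
    by (rule add_right_mono[OF I])
  also have "\<dots> \<le> ennreal (phi F s Lb lam - 2) + 1 + 1"
    by (intro add_right_mono add_left_mono B1)
  also have "\<dots> = ennreal (phi F s Lb lam - 2 + 2)"
  proof -
    have "ennreal (phi F s Lb lam - 2 + 2) = ennreal (phi F s Lb lam - 2) + ennreal 2"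
      using pf by (intro ennreal_plus) auto
    then show ?thesis by (simp add: add.assoc)
  qed
  finally show ?thesis by simp
qed

lemma sel_ok:
  assumes ys: "ys \<in> set_pmf (iid_list k P)" and k1: "k \<ge> 1"
    and i: "i \<in> set_pmf (pmf_of_set {i. i < k \<and> gg (ys ! i) = Max (gg ` set ys)})"
  shows "ys ! i \<in> set_pmf P"
proof -
  have len: "length ys = k" and sub: "set ys \<subseteq> set_pmf P" using iid_set[OF ys] by auto
  then have "ys \<noteq> []" using k1 by auto
  then have "Max (gg ` set ys) \<in> gg ` set ys" by (intro Max_in) auto
  then obtain j where "j < k" "gg (ys ! j) = Max (gg ` set ys)"
    using len by (auto simp: in_set_conv_nth)
  then have ne: "{i. i < k \<and> gg (ys ! i) = Max (gg ` set ys)} \<noteq> {}" by auto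
  have "i < k" using i ne by (subst (asm) set_pmf_of_set) auto
  then show ?thesis using len sub by auto
qed

lemma step_inv:
  assumes F1: "F > 1" and s0: "s > 0" and l1: "1 \<le> lam"
    and mlen: "\<And>x y. y \<in> set_pmf (mut x) \<Longrightarrow> length y = length x"
    and st: "st \<in> set_pmf (ea_step F s gg mut (x, lam))"
  shows "length (fst st) = length x \<and> 1 \<le> snd st"
proof -
  have k1: "nat (round lam) \<ge> 1" using round_ge1[OF l1] .
  have a1: "F powr (1/s) \<ge> 1" using F1 s0 by (intro ge_one_powr_ge_zero) auto
  have "1 * 1 \<le> F powr (1/s) * lam" using a1 l1 by (intro mult_mono) auto
  then have a2: "1 \<le> F powr (1/s) * lam" by simp
  from st obtain ys i where ys: "ys \<in> set_pmf (iid_list (nat (round lam)) (mut x))"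
    and i: "i \<in> set_pmf (pmf_of_set {i. i < nat (round lam) \<and> gg (ys ! i) = Max (gg ` set ys)})"
    and st_eq: "st = (ys ! i, if gg (ys ! i) > gg x then max 1 (lam / F) else F powr (1 / s) * lam)"
    unfolding ea_step_def Let_def by (auto simp: set_bind_pmf)
  have "ys ! i \<in> set_pmf (mut x)" using sel_ok[OF ys k1 i] .
  then show ?thesis using st_eq mlen a2 by auto
qed

theorem lemma3p2:
  fixes F s \<epsilon> :: real
    and f :: "nat \<Rightarrow> bool list \<Rightarrow> nat" and d :: "nat \<Rightarrow> nat"
    and mut :: "bool list \<Rightarrow> bool list pmf"
  assumes "F > 1" and "s > 0" and "0 < \<epsilon>" and "\<epsilon> < 1"
    and "\<forall>n x. length x = n \<longrightarrow> f n x \<le> d n"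
    and "\<forall>n. \<exists>x. length x = n \<and> f n x = d n"
    and "(\<lambda>n. ln (real (d n) + 1)) \<in> o(\<lambda>n. (ln (real n))^2)"
    and "(\<exists>p :: nat \<Rightarrow> real. mut = (\<lambda>x. sbm (p (length x)) x)
            \<and> p \<in> O(\<lambda>n. 1 / real n)
            \<and> (\<exists>c. eventually (\<lambda>n. real n powr (-c) \<le> p n) at_top))
         \<or> (\<exists>\<beta>>1. mut = heavy_tailed \<beta>)"
    and "everywhere_hard mut f d \<epsilon>"
  shows "\<exists>C. eventually (\<lambda>n. \<forall>x0 lam0. length x0 = n \<and> lam0 \<ge> 1 \<longrightarrow>
            expected_tau F s (f n) mut (real n powr (\<epsilon>/2)) x0 lam0
              \<le> ennreal (C * ln (real n powr (\<epsilon>/2)))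
          \<and> expected_evals F s (f n) mut (real n powr (\<epsilon>/2)) x0 lam0
              \<le> ennreal (lam0 + C * real n powr (\<epsilon>/2) * ln (real n powr (\<epsilon>/2)))) at_top"
proof -
  note A = assms
  have F1: "F > 1" and s0: "s > 0" and e0: "0 < \<epsilon>" using A by auto
  have mlen: "\<And>x y. y \<in> set_pmf (mut x) \<Longrightarrow> length y = length x"
    using A(8) by (auto dest: sbm_length heavy_length)
  obtain c where hc: "eventually (\<lambda>n. \<forall>x. length x = n \<and> f n x < d n \<longrightarrow>
       p_plus mut (f n) x \<le> c * real n powr (-\<epsilon>)) at_top"
    using A(9) unfolding everywhere_hard_def by blast
  define a where "a = F powr (1/s)"
  have lnapos: "ln a > 0" unfolding a_def using F1 s0 by (simp add: ln_powr)
  define C0 where "C0 = 2 / ln a + 2"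
  have C0pos: "C0 > 0" unfolding C0_def using lnapos by (simp add: add_pos_nonneg)
  define K where "K = (2 * s + 2) * 2 * \<bar>c\<bar>"
  have ev1: "eventually (\<lambda>n. 2 / \<epsilon> \<le> ln (real n)) at_top"
    using filterlim_compose[OF ln_at_top filterlim_real_sequentially]
    unfolding filterlim_at_top by blast
  have "((\<lambda>n. real n powr (-\<epsilon>/2)) \<longlongrightarrow> 0) at_top"
    by (rule tendsto_neg_powr) (use e0 filterlim_real_sequentially in auto)
  then have "((\<lambda>n. K * real n powr (-\<epsilon>/2)) \<longlongrightarrow> 0) at_top"
    by (rule tendsto_mult_right_zero)
  then have ev2: "eventually (\<lambda>n. K * real n powr (-\<epsilon>/2) < 1) at_top"
    by (rule order_tendstoD) simp
  have ev3: "eventually (\<lambda>n::nat. n \<ge> 1) at_top" by (rule eventually_ge_at_top)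
  show ?thesis
  proof (intro exI[of _ "2 * C0"], rule eventually_mono[OF eventually_conj[OF hc eventually_conj[OF ev1 eventually_conj[OF ev2 ev3]]]], intro allI impI)
    fix n :: nat and x0 :: "bool list" and lam0 :: real
    assume H: "(\<forall>x. length x = n \<and> f n x < d n \<longrightarrow> p_plus mut (f n) x \<le> c * real n powr - \<epsilon>) \<and>
      2 / \<epsilon> \<le> ln (real n) \<and> K * real n powr (- \<epsilon> / 2) < 1 \<and> 1 \<le> n"
      and X: "length x0 = n \<and> 1 \<le> lam0"
    define L where "L = real n powr (\<epsilon>/2)"
    have n1: "real n \<ge> 1" using H by simp
    have lnL: "ln L = \<epsilon>/2 * ln (real n)" unfolding L_def using n1 by (simp add: ln_powr)
    have lnL1: "ln L \<ge> 1" using lnL H e0 by (simp add: field_simps)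
    have Lpos: "L > 0" unfolding L_def using n1 by simp
    have L1: "L \<ge> 1" using lnL1 Lpos by (metis ln_ge_zero_iff order.trans zero_le_one)
    have LnE: "L * real n powr (-\<epsilon>) = real n powr (-\<epsilon>/2)"
      unfolding L_def using n1 by (simp add: powr_add[symmetric])
    have pplus: "p_plus mut (f n) x \<le> \<bar>c\<bar> * real n powr (-\<epsilon>)" if "length x = n" for x
    proof (cases "f n x < d n")
      case True
      then have "p_plus mut (f n) x \<le> c * real n powr (-\<epsilon>)" using H that by blast
      also have "\<dots> \<le> \<bar>c\<bar> * real n powr (-\<epsilon>)" by (intro mult_right_mono) auto
      finally show ?thesis .
    next
      case False
      then have fx: "f n x = d n" using A(5) that by (metis le_neq_implies_less)
      have "set_pmf (mut x) \<inter> {y. f n y > f n x} = {}"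
        using A(5) mlen that fx by (auto simp: not_less) (metis not_less)
      then have "p_plus mut (f n) x = 0" unfolding p_plus_def by (simp add: measure_pmf_zero_iff)
      then show ?thesis by simp
    qed
    define inv where "inv = (\<lambda>st::bool list \<times> real. length (fst st) = n \<and> 1 \<le> snd st)"
    define G where "G = (\<lambda>st::bool list \<times> real. ennreal (phi F s L (snd st)))"
    have inv_step: "inv st" if "inv s0" "snd s0 < L" "st \<in> set_pmf (ea_step F s (f n) mut s0)" for s0 st
      using step_inv[OF F1 s0 _ mlen, where lam="snd s0" and st=st and gg="f n" and x="fst s0"] that unfolding inv_def by auto
    have drift': "(\<integral>\<^sup>+st. G st \<partial>ea_step F s (f n) mut s0) + 1 \<le> G s0"
      if "inv s0" "snd s0 < L" for s0
    proof -
      obtain x lam where s0e: "s0 = (x, lam)" by (cases s0)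
      have xl: "length x = n" "1 \<le> lam" "lam < L" using that s0e unfolding inv_def by auto
      define k where "k = nat (round lam)"
      have "real k \<le> lam + 1/2" unfolding k_def using of_int_round_le[of lam] xl by linarith
      then have k2L: "real k \<le> 2 * L" using xl L1 by linarith
      have pp: "p_plus mut (f n) x \<ge> 0" unfolding p_plus_def by simp
      have "(2 * s + 2) * real k * p_plus mut (f n) x \<le> (2 * s + 2) * (2 * L) * (\<bar>c\<bar> * real n powr (-\<epsilon>))"
        using s0 k2L pp pplus[OF xl(1)] by (intro mult_mono) auto
      also have "\<dots> = K * (L * real n powr (-\<epsilon>))" unfolding K_def by (simp add: algebra_simps)
      also have "\<dots> \<le> 1" using LnE H by simp
      finally have q1: "(2 * s + 2) * real k * p_plus mut (f n) x \<le> 1" .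
      have "emeasure (measure_pmf (iid_list k (mut x))) {ys. \<exists>y\<in>set ys. f n y > f n x}
          \<le> of_nat k * emeasure (measure_pmf (mut x)) {y. f n y > f n x}"
        by (rule iid_union)
      also have "\<dots> = ennreal (real k * p_plus mut (f n) x)"
        unfolding p_plus_def measure_pmf.emeasure_eq_measure
        by (simp add: ennreal_mult ennreal_of_nat_eq_real_of_nat)
      finally have "ennreal (2 * s + 2) * emeasure (measure_pmf (iid_list k (mut x))) {ys. \<exists>y\<in>set ys. f n y > f n x}
          \<le> ennreal (2 * s + 2) * ennreal (real k * p_plus mut (f n) x)"
        by (rule mult_left_mono) simp
      also have "\<dots> = ennreal ((2 * s + 2) * real k * p_plus mut (f n) x)"
      proof -
        have h1: "0 \<le> 2 * s + 2" and h2: "0 \<le> real k * p_plus mut (f n) x" using s0 pp by auto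
        show ?thesis unfolding mult.assoc[of "2 * s + 2"] using ennreal_mult[OF h1 h2] by simp
      qed
      also have "\<dots> \<le> 1" using q1 by (simp add: ennreal_le_1)
      finally have q: "ennreal (2 * s + 2) * emeasure (measure_pmf (iid_list (nat (round lam)) (mut x))) {ys. \<exists>y\<in>set ys. f n y > f n x} \<le> 1"
        unfolding k_def .
      show ?thesis using drift[where gg="f n" and mut=mut and x=x, OF F1 s0 xl(2) xl(3) q] unfolding G_def s0e by simp
    qed
    have inv0: "inv (x0, lam0)" using X unfolding inv_def by simp
    have phi0: "phi F s L lam0 \<le> C0 * ln L"
    proof (cases "lam0 < L")
      case True
      have "phi F s L lam0 \<le> 2 * ln L / ln a + 2" using phi_facts(4)[OF F1 s0 _ True] X unfolding a_def by simp
      also have "\<dots> \<le> 2 * ln L / ln a + 2 * ln L" using lnL1 by simp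
      also have "\<dots> = C0 * ln L" unfolding C0_def by (simp add: field_simps)
      finally show ?thesis .
    next
      case False
      then show ?thesis unfolding phi_def using C0pos lnL1 by simp
    qed
    have phinn: "phi F s L lam0 \<ge> 0" using phi_nonneg[OF F1 s0] X by simp
    have tau_eq: "expected_tau F s (f n) mut L x0 lam0 = (\<Sum>t. Tm F s (f n) mut L (\<lambda>_. 1) t (x0, lam0))"
    proof -
      have "Tm F s (f n) mut L (\<lambda>_. 1) t (x0, lam0) =
          emeasure (measure_pmf (traj F s (f n) mut x0 lam0 t)) {h. \<forall>st\<in>set h. snd st < L}" for t
      proof -
        have "Tm F s (f n) mut L (\<lambda>_. 1) t (x0, lam0) =
          (\<integral>\<^sup>+h. indicator {h. \<forall>st\<in>set h. snd st < L} h \<partial>traj F s (f n) mut x0 lam0 t)"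
          unfolding Tm_def by (simp add: indicator_def of_bool_def)
        also have "\<dots> = emeasure (measure_pmf (traj F s (f n) mut x0 lam0 t)) {h. \<forall>st\<in>set h. snd st < L}"
          by (rule nn_integral_indicator) simp
        finally show ?thesis .
      qed
      then show ?thesis unfolding expected_tau_def by simp
    qed
    have "expected_tau F s (f n) mut L x0 lam0 \<le> 1 * G (x0, lam0)"
      unfolding tau_eq
      by (rule suminf_bound, rule sum_bound[where inv = inv])
        (auto intro: inv_step drift' inv0)
    also have "\<dots> \<le> ennreal (2 * C0 * ln L)"
    proof -
      have "0 \<le> C0 * ln L" using C0pos lnL1 by simp
      then have "phi F s L lam0 \<le> 2 * C0 * ln L" using phi0 by linarith
      then show ?thesis unfolding G_def by (simp add: ennreal_leI)
    qed
    finally have T: "expected_tau F s (f n) mut L x0 lam0 \<le> ennreal (2 * C0 * ln L)" .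
    have ev_eq: "expected_evals F s (f n) mut L x0 lam0 =
        (\<Sum>t. Tm F s (f n) mut L (\<lambda>st. ennreal (real (nat (round (snd st))))) t (x0, lam0))"
      unfolding expected_evals_def Tm_def by simp
    have cb: "ennreal (real (nat (round (snd st)))) \<le> ennreal (2 * L)" if "inv st" "snd st < L" for st
    proof -
      have "real (nat (round (snd st))) \<le> snd st + 1/2"
        using of_int_round_le[of "snd st"] that unfolding inv_def by linarith
      then show ?thesis using that L1 by (intro ennreal_leI) linarith
    qed
    have "expected_evals F s (f n) mut L x0 lam0 \<le> ennreal (2 * L) * G (x0, lam0)"
      unfolding ev_eq
      by (rule suminf_bound, rule sum_bound[where inv = inv])
        (auto intro: inv_step drift' inv0 cb)
    also have "\<dots> = ennreal (2 * L * phi F s L lam0)"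
      unfolding G_def using ennreal_mult[of "2 * L" "phi F s L lam0"] Lpos phinn by simp
    also have "\<dots> \<le> ennreal (lam0 + 2 * C0 * L * ln L)"
    proof (intro ennreal_leI)
      have "2 * L * phi F s L lam0 \<le> 2 * L * (C0 * ln L)"
        using phi0 Lpos by (intro mult_left_mono) auto
      then show "2 * L * phi F s L lam0 \<le> lam0 + 2 * C0 * L * ln L" using X by (simp add: algebra_simps)
    qed
    finally have E: "expected_evals F s (f n) mut L x0 lam0 \<le> ennreal (lam0 + 2 * C0 * L * ln L)" .
    show "expected_tau F s (f n) mut (real n powr (\<epsilon> / 2)) x0 lam0 \<le> ennreal (2 * C0 * ln (real n powr (\<epsilon> / 2))) \<and>
       expected_evals F s (f n) mut (real n powr (\<epsilon> / 2)) x0 lam0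
       \<le> ennreal (lam0 + 2 * C0 * real n powr (\<epsilon> / 2) * ln (real n powr (\<epsilon> / 2)))"
      using T E unfolding L_def by simp
  qed
qed

end
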